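(* In the setting and notation described in the context, suppose that $\Delta_{2,n},\Delta_{p_0+1,n},\Delta_{p_0+M-1,n},\Delta_{p_0,n}$ are each $O(n^{-\gamma_0})$, $\eta_n=O(n^{-\gamma_1})$, $V_{1n}=O(n^{\gamma_2})$, $V_{2n}=O(n^{\gamma_3})$, $C_{1n}=O(n^{\gamma_4})$, $C_{2n}=O(n^{\gamma_5})$, $C_{3n}=O(n^{\gamma_6})$, $C_{4n}=O(n^{\gamma_7})$, $p_0=O(n^{\gamma_8})$, $M=O(n^{\gamma_9})$, where $\gamma_1,\gamma_8,\gamma_9>0$, $\gamma_8<\gamma_9$, $3\gamma_9<\gamma_0$, $\gamma_9<2\gamma_1$, $\gamma_7<\gamma_1$, $\gamma_6<\gamma_1$, $\gamma_2<\gamma_0$, $\gamma_3<\gamma_0$, $3\gamma_9+\gamma_4<\gamma_0$, $3\gamma_9<\gamma_1$, $6\gamma_9+\gamma_5<\gamma_0$, $3\gamma_8+\gamma_4+\gamma_6<\gamma_0$, $3\gamma_8+\gamma_6<\gamma_1$, $6\gamma_8+\gamma_5+\gamma_6<\gamma_0$, $3\gamma_9+\gamma_4+\gamma_7<\gamma_0$, $3\gamma_9+\gamma_7<\gamma_1$, $6\gamma_9+\gamma_5+\gamma_7<\gamma_0$. Then there exist constants $\alpha\in(0,1)$ and $D>0$ such that, for all sufficiently large $n$, (i) $3(M+1)^2(9M+1)\Delta_{2,n}<\alpha$, and (ii) $12\tau^2-12(M-p_0+1)\eta_n^2-4\eta_n^2-4\eta_n(C_{4n}+C_{3n})-\Delta_{p_0,n}V_{1n}-\Delta_{p_0+M-1,n}V_{2n}-\rho_{1n}-\rho_{2n}>D$,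 where $\rho_{1n},\rho_{2n}$ are computed with this $\alpha$.
   Context: Setting. $n=1,2,\ldots$ indexes a sequence of problems. For each $n$ we are given integers $p=p_n$, $p_0=p_{0,n}$, $M=M_n$ with $1\le p_0\le M$ and $p_0<p$; a continuous function $f_n:[0,1]^p\to\mathbb{R}$; design points $\mathbf{x}_i=(x_{i1},\ldots,x_{ip})'\in[0,1)^p$, $i=1,\ldots,n$; a function $\widetilde f_n\in C[0,1]^{p_0}$; a number $\eta_n>0$; and a positive constant $\tau$. Let $\mathbf{X}$ be the $n\times p$ matrix with rows $\mathbf{x}_i'$. Let $Z_d=\{1,\ldots,d\}$, $\mathcal{A}_0=Z_{p_0}$. For $\mathcal{A}\subset Z_p$, $\mathbf{x}_{\mathcal{A}}$ is the subvector of $\mathbf{x}\in[0,1]^p$ with coordinates in $\mathcal{A}$ and $\mathbf{X}_{\mathcal{A}}$ the submatrix of $\mathbf{X}$ with columns in $\mathcal{A}$. $a_n=O(n^{\gamma})$ means $|a_n|\le cn^{\gamma}$ for some constant $c$ and all large $n$. Subset best linear approximation: for $\mathcal{A}\subset Z_p$, $(\beta_0(\mathcal{A}),\boldsymbol{\beta}(\mathcal{A})')'\in\mathbb{R}\times\mathbb{R}^{|\mathcal{A}|}$ minimizes $\int_{[0,1]^p}[f_n(\mathbf{x})-\phi_0-\boldsymbol{\phi}'\mathbf{x}_{\mathcal{A}}]^2d\mathbf{x}$ over $(\phi_0,\boldsymbol\phi)$; $\boldsymbol{\beta}_{Z_p}(\mathcal{A})\in\mathbb{R}^p$ has coordinates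 indexed by $\mathcal{A}$ equal to $\boldsymbol\beta(\mathcal{A})$ and all others $0$. Hardy–Krause variation: for $g:[0,1]^d\to\mathbb{R}$ and an axis-parallel rectangle $J$, $\Delta_J(g)$ is the sum of values of $g$ at the $2^d$ vertices of $J$ with alternating signs at nearest-neighbour vertices; $V^{Vit}(g)=\sup_\Pi\sum_{J\in\Pi}|\Delta_J(g)|$ over partitions $\Pi$ of $[0,1]^d$ into finitely many non-overlapping axis-parallel sub-rectangles; $V_{HK}(g)=\sum_{\emptyset\ne u\subset Z_d}V^{Vit}(g_u)$ where $g_u$ is $g$ with $x_k=1$ for $k\notin u$, as a function of $\mathbf{x}_u$. Functions depending on some coordinates of $\mathbf{x}\in[0,1]^p$ are regarded as functions on $[0,1]^p$. Discrepancy: for an $m\times d$ matrix $\mathbf{A}$ with rows $\mathbf{a}_i'\in[0,1]^d$, $\delta_{d,m}(\mathbf{A})=\sup_{\mathbf{x}\in[0,1]^d}|F_m(\mathbf{x})-\prod_{k=1}^dx_k|$, $F_m(\mathbf{x})=\frac1m\#\{i:a_{ik}\le x_k\ \forall k\}$. Sets: $\mathcal{U}_1=\{\mathcal{A}\subset Z_p:|\mathcal{A}|=M,\mathcal{A}_0\setminus\mathcal{A}\neq\emptyset\}$; $\mathcal{U}_2=\{\mathcal{A}\subset Z_p:|\mathcal{A}|=2\}$; $\mathcal{U}_3=\{\mathcal{A}_0\cup I_1:I_1\subset Z_p\setminus\mathcal{A}_0,|I_1|=1\}$; $\mathcal{U}_4=\{\mathcal{A}_0\cup I_2:I_2\subset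 Z_p\setminus\mathcal{A}_0,|I_2|=M-1\}$. $\Delta_{p_0,n}=\delta_{p_0,n}(\mathbf{X}_{\mathcal{A}_0})$, $\Delta_{2,n}=\max_{\mathcal{A}\in\mathcal{U}_2}\delta_{2,n}(\mathbf{X}_{\mathcal{A}})$, $\Delta_{p_0+1,n}=\max_{\mathcal{A}\in\mathcal{U}_3}\delta_{p_0+1,n}(\mathbf{X}_{\mathcal{A}})$, $\Delta_{p_0+M-1,n}=\max_{\mathcal{A}\in\mathcal{U}_4}\delta_{p_0+M-1,n}(\mathbf{X}_{\mathcal{A}})$. Constants: $C_{1n}=\max_{j=1,\ldots,p}\max(V_{HK}(\widetilde f_n),V_{HK}(x_j\widetilde f_n))$; $C_{2n}=\max_{\mathbf{x}\in[0,1]^p}|f_n(\mathbf{x})|$; $C_{3n}=\max_{\mathbf{x}\in[0,1]^p}|\widetilde f_n(\mathbf{x}_{\mathcal{A}_0})-\mathbf{x}'\boldsymbol\beta_{Z_p}(\mathcal{A}_0)-\beta_0(\mathcal{A}_0)|$; $C_{4n}=\max_{\mathcal{A}\in\mathcal{U}_1}\max_{\mathbf{x}\in[0,1]^p}|\widetilde f_n(\mathbf{x}_{\mathcal{A}_0})-\mathbf{x}'\boldsymbol\beta_{Z_p}(\mathcal{A})-\beta_0(\mathcal{A})|$; $V_{1n}=V_{HK}(\widetilde f_n(\mathbf{x}_{\mathcal{A}_0})-\beta_0(\mathcal{A}_0)-\mathbf{x}'\boldsymbol\beta_{Z_p}(\mathcal{A}_0))$; $V_{2n}=\max_{\mathcal{A}\in\mathcal{U}_1}V_{HK}(\widetilde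 f_n(\mathbf{x}_{\mathcal{A}_0})-\beta_0(\mathcal{A})-\mathbf{x}'\boldsymbol\beta_{Z_p}(\mathcal{A}))$. For $\alpha\in(0,1)$: $\zeta_{1n}=C_{1n}(p_0+1)^2(9p_0+1)\Delta_{p_0,n}+2(p_0+1)^2(9p_0+1)\eta_n+\frac{3}{1-\alpha}C_{2n}(p_0+1)^4(9p_0+1)^2\Delta_{2,n}$; $\zeta_{2n}=C_{1n}(M+1)^2(9M+1)\Delta_{p_0+1,n}+2(M+1)^2(9M+1)\eta_n+\frac{3}{1-\alpha}C_{2n}(M+1)^4(9M+1)^2\Delta_{2,n}$; $\rho_{1n}=\zeta_{1n}^2+2(C_{3n}+\eta_n)\zeta_{1n}+2(p_0+1)^{-1/2}\zeta_{1n}^2$; $\rho_{2n}=\zeta_{2n}^2+2(C_{4n}+\eta_n)\zeta_{2n}+2(M+1)^{-1/2}\zeta_{2n}^2$. *)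

theory Defs
  imports "HOL-Probability.Probability" "HOL-Library.Landau_Symbols"
begin

text \<open>Points of [0,1]^I are extensional functions nat => real, defined on the
  coordinate index set I (undefined outside I).  Z_d = {1..d}.\<close>

definition cube :: "nat set \<Rightarrow> (nat \<Rightarrow> real) set" where
  "cube I = PiE I (\<lambda>_. {0..1})"

definition unifcube :: "nat \<Rightarrow> (nat \<Rightarrow> real) measure" where
  "unifcube p = PiM {1..p} (\<lambda>_. uniform_measure lborel {0..1::real})"

definition lin :: "nat \<Rightarrow> (nat \<Rightarrow> real) \<Rightarrow> (nat \<Rightarrow> real) \<Rightarrow> real" where
  "lin p b x = (\<Sum>j\<in>{1..p}. x j * b j)"

definition l2err :: "((nat \<Rightarrow> real) \<Rightarrow> real) \<Rightarrow> nat \<Rightarrow> nat set \<Rightarrow> real \<Rightarrow> (nat \<Rightarrow> real) \<Rightarrow> real" where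
  "l2err f p A c0 c = (\<integral>x. (f x - c0 - (\<Sum>j\<in>A. c j * x j))\<^sup>2 \<partial>unifcube p)"

definition is_best_lin :: "((nat \<Rightarrow> real) \<Rightarrow> real) \<Rightarrow> nat \<Rightarrow> nat set \<Rightarrow> real \<Rightarrow> (nat \<Rightarrow> real) \<Rightarrow> bool" where
  "is_best_lin f p A b0 b \<longleftrightarrow> (\<forall>j. j \<notin> A \<longrightarrow> b j = 0) \<and>
     (\<forall>c0 c. l2err f p A b0 b \<le> l2err f p A c0 c)"

definition best_lin :: "((nat \<Rightarrow> real) \<Rightarrow> real) \<Rightarrow> nat \<Rightarrow> nat set \<Rightarrow> real \<times> (nat \<Rightarrow> real)" where
  "best_lin f p A = (SOME bb. is_best_lin f p A (fst bb) (snd bb))"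

definition beta0 :: "((nat \<Rightarrow> real) \<Rightarrow> real) \<Rightarrow> nat \<Rightarrow> nat set \<Rightarrow> real" where
  "beta0 f p A = fst (best_lin f p A)"

definition betaZ :: "((nat \<Rightarrow> real) \<Rightarrow> real) \<Rightarrow> nat \<Rightarrow> nat set \<Rightarrow> nat \<Rightarrow> real" where
  "betaZ f p A = snd (best_lin f p A)"

definition rect_delta :: "nat set \<Rightarrow> ((nat \<Rightarrow> real) \<Rightarrow> real) \<Rightarrow> (nat \<Rightarrow> real) \<Rightarrow> (nat \<Rightarrow> real) \<Rightarrow> real" where
  "rect_delta I g a b = (\<Sum>S\<in>Pow I. (-1) ^ card S * g (restrict (\<lambda>k. if k \<in> S then a k else b k) I))"

definition is_rect_partition :: "nat set \<Rightarrow> ((nat \<Rightarrow> real) \<times> (nat \<Rightarrow> real)) set \<Rightarrow> bool" where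
  "is_rect_partition I P \<longleftrightarrow> finite P \<and>
     (\<forall>(a,b)\<in>P. a \<in> extensional I \<and> b \<in> extensional I \<and> (\<forall>k\<in>I. 0 \<le> a k \<and> a k \<le> b k \<and> b k \<le> 1)) \<and>
     (\<Union>(a,b)\<in>P. PiE I (\<lambda>k. {a k..b k})) = cube I \<and>
     (\<forall>(a,b)\<in>P. \<forall>(a',b')\<in>P. (a,b) \<noteq> (a',b') \<longrightarrow>
        (\<exists>k\<in>I. min (b k) (b' k) \<le> max (a k) (a' k)))"

definition vitali :: "nat set \<Rightarrow> ((nat \<Rightarrow> real) \<Rightarrow> real) \<Rightarrow> ereal" where
  "vitali I g = (SUP P\<in>{P. is_rect_partition I P}. ereal (\<Sum>(a,b)\<in>P. \<bar>rect_delta I g a b\<bar>))"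

definition VHK :: "nat set \<Rightarrow> ((nat \<Rightarrow> real) \<Rightarrow> real) \<Rightarrow> ereal" where
  "VHK I g = (\<Sum>u\<in>{u. u \<subseteq> I \<and> u \<noteq> {}}.
      vitali u (\<lambda>y. g (restrict (\<lambda>k. if k \<in> u then y k else 1) I)))"

text \<open>Star discrepancy of the first m rows of X (X i k = entry in row i, column k),
  restricted to the columns in A.\<close>
definition discrepancy :: "nat set \<Rightarrow> nat \<Rightarrow> (nat \<Rightarrow> nat \<Rightarrow> real) \<Rightarrow> real" where
  "discrepancy A m X = (SUP y\<in>cube A.
      \<bar>real (card {i\<in>{1..m}. \<forall>k\<in>A. X i k \<le> y k}) / real m - (\<Prod>k\<in>A. y k)\<bar>)"

definition max0 :: "real set \<Rightarrow> real" where
  "max0 S = (if S = {} then 0 else Sup S)"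

definition emax0 :: "ereal set \<Rightarrow> ereal" where
  "emax0 S = (if S = {} then 0 else Sup S)"

definition U1 :: "nat \<Rightarrow> nat \<Rightarrow> nat \<Rightarrow> nat set set" where
  "U1 p p0 M = {A. A \<subseteq> {1..p} \<and> card A = M \<and> {1..p0} - A \<noteq> {}}"
definition U2 :: "nat \<Rightarrow> nat set set" where
  "U2 p = {A. A \<subseteq> {1..p} \<and> card A = 2}"
definition U3 :: "nat \<Rightarrow> nat \<Rightarrow> nat set set" where
  "U3 p p0 = {{1..p0} \<union> I1 | I1. I1 \<subseteq> {1..p} - {1..p0} \<and> card I1 = 1}"
definition U4 :: "nat \<Rightarrow> nat \<Rightarrow> nat \<Rightarrow> nat set set" where
  "U4 p p0 M = {{1..p0} \<union> I2 | I2. I2 \<subseteq> {1..p} - {1..p0} \<and> card I2 = M - 1}"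

definition Delta_p0 :: "nat \<Rightarrow> nat \<Rightarrow> (nat \<Rightarrow> nat \<Rightarrow> real) \<Rightarrow> real" where
  "Delta_p0 p0 n X = discrepancy {1..p0} n X"
definition Delta_2 :: "nat \<Rightarrow> nat \<Rightarrow> (nat \<Rightarrow> nat \<Rightarrow> real) \<Rightarrow> real" where
  "Delta_2 p n X = max0 ((\<lambda>A. discrepancy A n X) ` U2 p)"
definition Delta_p0p1 :: "nat \<Rightarrow> nat \<Rightarrow> nat \<Rightarrow> (nat \<Rightarrow> nat \<Rightarrow> real) \<Rightarrow> real" where
  "Delta_p0p1 p p0 n X = max0 ((\<lambda>A. discrepancy A n X) ` U3 p p0)"
definition Delta_p0M1 :: "nat \<Rightarrow> nat \<Rightarrow> nat \<Rightarrow> nat \<Rightarrow> (nat \<Rightarrow> nat \<Rightarrow> real) \<Rightarrow> real" where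
  "Delta_p0M1 p p0 M n X = max0 ((\<lambda>A. discrepancy A n X) ` U4 p p0 M)"

definition onA0 :: "nat \<Rightarrow> ((nat \<Rightarrow> real) \<Rightarrow> real) \<Rightarrow> (nat \<Rightarrow> real) \<Rightarrow> real" where
  "onA0 p0 ft = (\<lambda>x. ft (restrict x {1..p0}))"

definition resid :: "((nat \<Rightarrow> real) \<Rightarrow> real) \<Rightarrow> nat \<Rightarrow> nat \<Rightarrow> ((nat \<Rightarrow> real) \<Rightarrow> real) \<Rightarrow> nat set
     \<Rightarrow> (nat \<Rightarrow> real) \<Rightarrow> real" where
  "resid f p p0 ft A = (\<lambda>x. onA0 p0 ft x - lin p (betaZ f p A) x - beta0 f p A)"

definition C1 :: "nat \<Rightarrow> nat \<Rightarrow> ((nat \<Rightarrow> real) \<Rightarrow> real) \<Rightarrow> ereal" where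
  "C1 p p0 ft = Max ((\<lambda>j. max (VHK {1..p} (onA0 p0 ft)) (VHK {1..p} (\<lambda>x. x j * onA0 p0 ft x))) ` {1..p})"
definition C2 :: "nat \<Rightarrow> ((nat \<Rightarrow> real) \<Rightarrow> real) \<Rightarrow> real" where
  "C2 p f = (SUP x\<in>cube {1..p}. \<bar>f x\<bar>)"
definition C3 :: "((nat \<Rightarrow> real) \<Rightarrow> real) \<Rightarrow> nat \<Rightarrow> nat \<Rightarrow> ((nat \<Rightarrow> real) \<Rightarrow> real) \<Rightarrow> real" where
  "C3 f p p0 ft = (SUP x\<in>cube {1..p}. \<bar>resid f p p0 ft {1..p0} x\<bar>)"
definition C4 :: "((nat \<Rightarrow> real) \<Rightarrow> real) \<Rightarrow> nat \<Rightarrow> nat \<Rightarrow> nat \<Rightarrow> ((nat \<Rightarrow> real) \<Rightarrow> real) \<Rightarrow> real" where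
  "C4 f p p0 M ft = max0 ((\<lambda>A. SUP x\<in>cube {1..p}. \<bar>resid f p p0 ft A x\<bar>) ` U1 p p0 M)"
definition V1 :: "((nat \<Rightarrow> real) \<Rightarrow> real) \<Rightarrow> nat \<Rightarrow> nat \<Rightarrow> ((nat \<Rightarrow> real) \<Rightarrow> real) \<Rightarrow> ereal" where
  "V1 f p p0 ft = VHK {1..p} (resid f p p0 ft {1..p0})"
definition V2 :: "((nat \<Rightarrow> real) \<Rightarrow> real) \<Rightarrow> nat \<Rightarrow> nat \<Rightarrow> nat \<Rightarrow> ((nat \<Rightarrow> real) \<Rightarrow> real) \<Rightarrow> ereal" where
  "V2 f p p0 M ft = emax0 ((\<lambda>A. VHK {1..p} (resid f p p0 ft A)) ` U1 p p0 M)"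

text \<open>zeta_{1n} (q = p0, Da = Delta_{p0,n}) and zeta_{2n} (q = M, Da = Delta_{p0+1,n}).\<close>
definition zeta :: "real \<Rightarrow> real \<Rightarrow> real \<Rightarrow> real \<Rightarrow> real \<Rightarrow> real \<Rightarrow> nat \<Rightarrow> real" where
  "zeta \<alpha> c1 c2 Da D2 eta q =
     c1 * (real q + 1)^2 * (9 * real q + 1) * Da + 2 * (real q + 1)^2 * (9 * real q + 1) * eta
     + 3 / (1 - \<alpha>) * c2 * (real q + 1)^4 * (9 * real q + 1)^2 * D2"

text \<open>rho_{1n} (C = C3, q = p0) and rho_{2n} (C = C4, q = M).\<close>
definition rho :: "real \<Rightarrow> real \<Rightarrow> real \<Rightarrow> nat \<Rightarrow> real" where
  "rho z c eta q = z^2 + 2 * (c + eta) * z + 2 * (1 / sqrt (real q + 1)) * z^2"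

definition ereal_bigO :: "(nat \<Rightarrow> ereal) \<Rightarrow> real \<Rightarrow> bool" where
  "ereal_bigO a \<gamma> \<longleftrightarrow> (\<exists>c. \<forall>\<^sub>F n in sequentially. \<bar>a n\<bar> \<le> ereal (c * real n powr \<gamma>))"

end

theory Submission
  imports Defs
begin

lemma L0:
  fixes f :: "nat \<Rightarrow> real"
  assumes "f \<in> O(\<lambda>n. real n powr e)" "e < 0"
  shows "f \<longlonglongrightarrow> 0"
proof -
  obtain c where c: "c > 0" "eventually (\<lambda>n. norm (f n) \<le> c * norm (real n powr e)) sequentially"
    using landau_o.bigE[OF assms(1)] by blast
  have t: "(\<lambda>n. real n powr e) \<longlonglongrightarrow> 0"
    by (intro tendsto_neg_powr assms(2) filterlim_real_sequentially)
  have "(\<lambda>n. c * norm (real n powr e)) \<longlonglongrightarrow> c * norm (0::real)"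
    by (intro tendsto_intros t)
  then have t2: "(\<lambda>n. c * norm (real n powr e)) \<longlonglongrightarrow> 0" by simp
  show ?thesis
    by (rule Lim_null_comparison[OF c(2) t2])
qed

lemma LM:
  fixes f g :: "nat \<Rightarrow> real"
  assumes "f \<in> O(\<lambda>n. real n powr a)" "g \<in> O(\<lambda>n. real n powr b)"
  shows "(\<lambda>n. f n * g n) \<in> O(\<lambda>n. real n powr (a + b))"
proof -
  have "(\<lambda>n. f n * g n) \<in> O(\<lambda>n. real n powr a * real n powr b)"
    by (rule landau_o.big_mult[OF assms])
  then show ?thesis by (simp add: powr_add)
qed

lemma LE:
  assumes "ereal_bigO a g"
  shows "(\<lambda>n. real_of_ereal (a n)) \<in> O(\<lambda>n. real n powr g)"
proof -
  obtain c where c: "\<forall>\<^sub>F n in sequentially. \<bar>a n\<bar> \<le> ereal (c * real n powr g)"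
    using assms unfolding ereal_bigO_def by blast
  have "\<forall>\<^sub>F n in sequentially. norm (real_of_ereal (a n)) \<le> (\<bar>c\<bar> + 1) * norm (real n powr g)"
    using c
  proof eventually_elim
    case (elim n)
    have "\<bar>real_of_ereal (a n)\<bar> \<le> c * real n powr g"
    proof (cases "a n")
      case (real r) then show ?thesis using elim by simp
    next
      case PInf then show ?thesis using elim by simp
    next
      case MInf then show ?thesis using elim by simp
    qed
    also have "\<dots> \<le> (\<bar>c\<bar> + 1) * norm (real n powr g)"
      by (intro mult_mono) auto
    finally show ?case by simp
  qed
  then show ?thesis by (intro landau_o.bigI[of "\<bar>c\<bar> + 1"]) auto
qed

lemma LP:
  fixes q :: "nat \<Rightarrow> nat"
  assumes "(\<lambda>n. real (q n)) \<in> O(\<lambda>n. real n powr g)" "eventually (\<lambda>n. 1 \<le> q n) sequentially"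
  shows "(\<lambda>n. (real (q n) + 1)^2 * (9 * real (q n) + 1)) \<in> O(\<lambda>n. real n powr (3*g))"
proof -
  have "(\<lambda>n. real (q n) * real (q n) * real (q n)) \<in> O(\<lambda>n. real n powr (g + g + g))"
    by (intro LM assms(1))
  then have a: "(\<lambda>n. real (q n) * real (q n) * real (q n)) \<in> O(\<lambda>n. real n powr (3*g))"
    by (simp add: algebra_simps)
  have "\<forall>\<^sub>F n in sequentially. norm ((real (q n) + 1)^2 * (9 * real (q n) + 1))
        \<le> 40 * norm (real (q n) * real (q n) * real (q n))"
    using assms(2)
  proof eventually_elim
    case (elim n)
    define x where "x = real (q n)"
    have x: "1 \<le> x" using elim by (simp add: x_def)
    have "(x + 1)^2 * (9 * x + 1) \<le> (2*x)^2 * (10 * x)"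
      using x by (intro mult_mono power_mono) auto
    then show ?case using x by (simp add: x_def[symmetric] power2_eq_square algebra_simps)
  qed
  then have "(\<lambda>n. (real (q n) + 1)^2 * (9 * real (q n) + 1)) \<in> O(\<lambda>n. real (q n) * real (q n) * real (q n))"
    by (intro landau_o.bigI[of 40]) auto
  then show ?thesis using a by (rule landau_o.big_trans)
qed

lemma LR:
  fixes c1 c2 c Da D2 eta :: "nat \<Rightarrow> real" and q :: "nat \<Rightarrow> nat"
  assumes c1: "c1 \<in> O(\<lambda>n. real n powr a4)" and c2: "c2 \<in> O(\<lambda>n. real n powr a5)"
    and c: "c \<in> O(\<lambda>n. real n powr a6)"
    and Da: "Da \<in> O(\<lambda>n. real n powr (-a0))" and D2: "D2 \<in> O(\<lambda>n. real n powr (-a0))"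
    and eta: "eta \<in> O(\<lambda>n. real n powr (-a1))"
    and q: "(\<lambda>n. real (q n)) \<in> O(\<lambda>n. real n powr g)" and q1: "eventually (\<lambda>n. 1 \<le> q n) sequentially"
    and a1: "a1 > 0"
    and r: "3*g+a4<a0" "3*g<a1" "6*g+a5<a0" "3*g+a4+a6<a0" "3*g+a6<a1" "6*g+a5+a6<a0"
  shows "(\<lambda>n. rho (zeta (1/2) (c1 n) (c2 n) (Da n) (D2 n) (eta n) (q n)) (c n) (eta n) (q n)) \<longlonglongrightarrow> 0"
proof -
  define A where "A n = (real (q n) + 1)^2 * (9 * real (q n) + 1)" for n
  have A: "A \<in> O(\<lambda>n. real n powr (3*g))" unfolding A_def by (rule LP[OF q q1])
  have A2: "(\<lambda>n. A n * A n) \<in> O(\<lambda>n. real n powr (3*g + 3*g))" by (rule LM[OF A A])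
  define t1 where "t1 n = c1 n * A n * Da n" for n
  define t2 where "t2 n = A n * eta n" for n
  define t3 where "t3 n = c2 n * (A n * A n) * D2 n" for n
  have t1: "t1 \<in> O(\<lambda>n. real n powr (a4 + 3*g + -a0))" unfolding t1_def by (intro LM c1 A Da)
  have t2: "t2 \<in> O(\<lambda>n. real n powr (3*g + -a1))" unfolding t2_def by (intro LM eta A)
  have t3: "t3 \<in> O(\<lambda>n. real n powr (a5 + (3*g+3*g) + -a0))" unfolding t3_def by (intro LM c2 A2 D2)
  have ct1: "(\<lambda>n. c n * t1 n) \<in> O(\<lambda>n. real n powr (a6 + (a4 + 3*g + -a0)))" by (intro LM c t1)
  have ct2: "(\<lambda>n. c n * t2 n) \<in> O(\<lambda>n. real n powr (a6 + (3*g + -a1)))" by (intro LM c t2)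
  have ct3: "(\<lambda>n. c n * t3 n) \<in> O(\<lambda>n. real n powr (a6 + (a5 + (3*g+3*g) + -a0)))" by (intro LM c t3)
  have lt1: "t1 \<longlonglongrightarrow> 0" by (rule L0[OF t1]) (use r in linarith)
  have lt2: "t2 \<longlonglongrightarrow> 0" by (rule L0[OF t2]) (use r in linarith)
  have lt3: "t3 \<longlonglongrightarrow> 0" by (rule L0[OF t3]) (use r in linarith)
  have lct1: "(\<lambda>n. c n * t1 n) \<longlonglongrightarrow> 0" by (rule L0[OF ct1]) (use r in linarith)
  have lct2: "(\<lambda>n. c n * t2 n) \<longlonglongrightarrow> 0" by (rule L0[OF ct2]) (use r in linarith)
  have lct3: "(\<lambda>n. c n * t3 n) \<longlonglongrightarrow> 0" by (rule L0[OF ct3]) (use r in linarith)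
  have leta: "eta \<longlonglongrightarrow> 0" by (rule L0[OF eta]) (use a1 in linarith)
  define z where "z n = t1 n + 2 * t2 n + 6 * t3 n" for n
  have zeq: "zeta (1/2) (c1 n) (c2 n) (Da n) (D2 n) (eta n) (q n) = z n" for n
    proof -
    have h: "3 / (1 - 1/2) = (6::real)" by simp
    show ?thesis unfolding zeta_def z_def t1_def t2_def t3_def A_def h by algebra
  qed
  have lz: "z \<longlonglongrightarrow> 0" 
  proof -
    have "(\<lambda>n. t1 n + 2 * t2 n + 6 * t3 n) \<longlonglongrightarrow> 0 + 2*0 + 6*0"
      by (intro tendsto_intros lt1 lt2 lt3)
    then show ?thesis unfolding z_def by simp
  qed
  have lcz: "(\<lambda>n. c n * z n) \<longlonglongrightarrow> 0" unfolding z_def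
    using tendsto_add_zero[OF tendsto_add_zero[OF lct1 tendsto_mult_right_zero[OF lct2, of 2]] tendsto_mult_right_zero[OF lct3, of 6]]
    by (simp add: algebra_simps)
  have lsq: "(\<lambda>n. 2 * (1 / sqrt (real (q n) + 1)) * (z n)^2) \<longlonglongrightarrow> 0"
  proof (rule Lim_null_comparison)
    show "\<forall>\<^sub>F n in sequentially. norm (2 * (1 / sqrt (real (q n) + 1)) * (z n)^2) \<le> 2 * (z n)^2"
    proof (intro always_eventually allI)
      fix n
      have "1 / sqrt (real (q n) + 1) \<le> 1" by simp
      moreover have "0 \<le> 1 / sqrt (real (q n) + 1)" by simp
      ultimately have "(1 / sqrt (real (q n) + 1)) * (z n)^2 \<le> 1 * (z n)^2"
        by (intro mult_right_mono) auto
      then show "norm (2 * (1 / sqrt (real (q n) + 1)) * (z n)^2) \<le> 2 * (z n)^2" by simp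
    qed
    have "(\<lambda>n. 2 * (z n)^2) \<longlonglongrightarrow> 2 * 0^2" by (intro tendsto_intros lz)
    then show "(\<lambda>n. 2 * (z n)^2) \<longlonglongrightarrow> 0" by simp
  qed
  have "(\<lambda>n. (z n)^2 + 2 * (c n * z n) + 2 * (eta n * z n) + 2 * (1 / sqrt (real (q n) + 1)) * (z n)^2) \<longlonglongrightarrow> 0^2 + 2*0 + 2*(0*0) + 0"
    by (intro tendsto_intros lz lcz leta lsq)
  then show ?thesis unfolding zeq rho_def by (simp add: algebra_simps)
qed

theorem theorem3:
  fixes p p0 M :: "nat \<Rightarrow> nat"
    and f :: "nat \<Rightarrow> (nat \<Rightarrow> real) \<Rightarrow> real"
    and X :: "nat \<Rightarrow> nat \<Rightarrow> nat \<Rightarrow> real"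
    and ft :: "nat \<Rightarrow> (nat \<Rightarrow> real) \<Rightarrow> real"
    and \<eta> :: "nat \<Rightarrow> real"
    and \<tau> :: real
    and \<gamma>0 \<gamma>1 \<gamma>2 \<gamma>3 \<gamma>4 \<gamma>5 \<gamma>6 \<gamma>7 \<gamma>8 \<gamma>9 :: real
  assumes dims: "\<forall>n\<ge>1. 1 \<le> p0 n \<and> p0 n \<le> M n \<and> p0 n < p n"
    and f_cont: "\<forall>n\<ge>1. continuous_on (cube {1..p n}) (f n)"
    and design: "\<forall>n\<ge>1. \<forall>i\<in>{1..n}. \<forall>k\<in>{1..p n}. 0 \<le> X n i k \<and> X n i k < 1"
    and ft_cont: "\<forall>n\<ge>1. continuous_on (cube {1..p0 n}) (ft n)"
    and eta_pos: "\<forall>n\<ge>1. \<eta> n > 0"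
    and tau_pos: "\<tau> > 0"
    and D2_O: "(\<lambda>n. Delta_2 (p n) n (X n)) \<in> O(\<lambda>n. real n powr (- \<gamma>0))"
    and D3_O: "(\<lambda>n. Delta_p0p1 (p n) (p0 n) n (X n)) \<in> O(\<lambda>n. real n powr (- \<gamma>0))"
    and D4_O: "(\<lambda>n. Delta_p0M1 (p n) (p0 n) (M n) n (X n)) \<in> O(\<lambda>n. real n powr (- \<gamma>0))"
    and D1_O: "(\<lambda>n. Delta_p0 (p0 n) n (X n)) \<in> O(\<lambda>n. real n powr (- \<gamma>0))"
    and eta_O: "\<eta> \<in> O(\<lambda>n. real n powr (- \<gamma>1))"
    and V1_O: "ereal_bigO (\<lambda>n. V1 (f n) (p n) (p0 n) (ft n)) \<gamma>2"
    and V2_O: "ereal_bigO (\<lambda>n. V2 (f n) (p n) (p0 n) (M n) (ft n)) \<gamma>3"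
    and C1_O: "ereal_bigO (\<lambda>n. C1 (p n) (p0 n) (ft n)) \<gamma>4"
    and C2_O: "(\<lambda>n. C2 (p n) (f n)) \<in> O(\<lambda>n. real n powr \<gamma>5)"
    and C3_O: "(\<lambda>n. C3 (f n) (p n) (p0 n) (ft n)) \<in> O(\<lambda>n. real n powr \<gamma>6)"
    and C4_O: "(\<lambda>n. C4 (f n) (p n) (p0 n) (M n) (ft n)) \<in> O(\<lambda>n. real n powr \<gamma>7)"
    and p0_O: "(\<lambda>n. real (p0 n)) \<in> O(\<lambda>n. real n powr \<gamma>8)"
    and M_O: "(\<lambda>n. real (M n)) \<in> O(\<lambda>n. real n powr \<gamma>9)"
    and g_pos: "\<gamma>1 > 0" "\<gamma>8 > 0" "\<gamma>9 > 0"
    and g_rel: "\<gamma>8 < \<gamma>9" "3 * \<gamma>9 < \<gamma>0" "\<gamma>9 < 2 * \<gamma>1" "\<gamma>7 < \<gamma>1" "\<gamma>6 < \<gamma>1"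
      "\<gamma>2 < \<gamma>0" "\<gamma>3 < \<gamma>0" "3 * \<gamma>9 + \<gamma>4 < \<gamma>0" "3 * \<gamma>9 < \<gamma>1"
      "6 * \<gamma>9 + \<gamma>5 < \<gamma>0" "3 * \<gamma>8 + \<gamma>4 + \<gamma>6 < \<gamma>0" "3 * \<gamma>8 + \<gamma>6 < \<gamma>1"
      "6 * \<gamma>8 + \<gamma>5 + \<gamma>6 < \<gamma>0" "3 * \<gamma>9 + \<gamma>4 + \<gamma>7 < \<gamma>0" "3 * \<gamma>9 + \<gamma>7 < \<gamma>1"
      "6 * \<gamma>9 + \<gamma>5 + \<gamma>7 < \<gamma>0"
  shows "\<exists>\<alpha> D. 0 < \<alpha> \<and> \<alpha> < 1 \<and> D > 0 \<and>
    (\<forall>\<^sub>F n in sequentially.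
       let D2n = Delta_2 (p n) n (X n);
           D1n = Delta_p0 (p0 n) n (X n);
           D3n = Delta_p0p1 (p n) (p0 n) n (X n);
           D4n = Delta_p0M1 (p n) (p0 n) (M n) n (X n);
           c1 = real_of_ereal (C1 (p n) (p0 n) (ft n));
           c2 = C2 (p n) (f n);
           c3 = C3 (f n) (p n) (p0 n) (ft n);
           c4 = C4 (f n) (p n) (p0 n) (M n) (ft n);
           v1 = real_of_ereal (V1 (f n) (p n) (p0 n) (ft n));
           v2 = real_of_ereal (V2 (f n) (p n) (p0 n) (M n) (ft n));
           z1 = zeta \<alpha> c1 c2 D1n D2n (\<eta> n) (p0 n);
           z2 = zeta \<alpha> c1 c2 D3n D2n (\<eta> n) (M n);
           r1 = rho z1 c3 (\<eta> n) (p0 n);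
           r2 = rho z2 c4 (\<eta> n) (M n)
       in 3 * (real (M n) + 1)^2 * (9 * real (M n) + 1) * D2n < \<alpha> \<and>
          12 * \<tau>^2 - 12 * (real (M n) - real (p0 n) + 1) * (\<eta> n)^2 - 4 * (\<eta> n)^2
            - 4 * \<eta> n * (c4 + c3) - D1n * v1 - D4n * v2 - r1 - r2 > D)"
proof -
  let ?Mr = "\<lambda>n. real (M n)" and ?pr = "\<lambda>n. real (p0 n)"
  define c1 where "c1 n = real_of_ereal (C1 (p n) (p0 n) (ft n))" for n
  define v1 where "v1 n = real_of_ereal (V1 (f n) (p n) (p0 n) (ft n))" for n
  define v2 where "v2 n = real_of_ereal (V2 (f n) (p n) (p0 n) (M n) (ft n))" for n
  have c1O: "c1 \<in> O(\<lambda>n. real n powr \<gamma>4)" unfolding c1_def by (rule LE[OF C1_O])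
  have v1O: "v1 \<in> O(\<lambda>n. real n powr \<gamma>2)" unfolding v1_def by (rule LE[OF V1_O])
  have v2O: "v2 \<in> O(\<lambda>n. real n powr \<gamma>3)" unfolding v2_def by (rule LE[OF V2_O])
  have p01: "eventually (\<lambda>n. 1 \<le> p0 n) sequentially"
    using dims by (intro eventually_sequentiallyI[of 1]) auto
  have M1: "eventually (\<lambda>n. 1 \<le> M n) sequentially"
    using dims by (intro eventually_sequentiallyI[of 1]) (auto intro: order_trans)
  have r1: "(\<lambda>n. rho (zeta (1/2) (c1 n) (C2 (p n) (f n)) (Delta_p0 (p0 n) n (X n)) (Delta_2 (p n) n (X n)) (\<eta> n) (p0 n))
      (C3 (f n) (p n) (p0 n) (ft n)) (\<eta> n) (p0 n)) \<longlonglongrightarrow> 0"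
    by (rule LR[OF c1O C2_O C3_O D1_O D2_O eta_O p0_O p01 g_pos(1)]) (use g_rel in linarith)+
  have r2: "(\<lambda>n. rho (zeta (1/2) (c1 n) (C2 (p n) (f n)) (Delta_p0p1 (p n) (p0 n) n (X n)) (Delta_2 (p n) n (X n)) (\<eta> n) (M n))
      (C4 (f n) (p n) (p0 n) (M n) (ft n)) (\<eta> n) (M n)) \<longlonglongrightarrow> 0"
    by (rule LR[OF c1O C2_O C4_O D3_O D2_O eta_O M_O M1 g_pos(1)]) (use g_rel in linarith)+
  have AM: "(\<lambda>n. (?Mr n + 1)^2 * (9 * ?Mr n + 1)) \<in> O(\<lambda>n. real n powr (3*\<gamma>9))"
    by (rule LP[OF M_O M1])
  have T1O: "(\<lambda>n. (?Mr n + 1)^2 * (9 * ?Mr n + 1) * Delta_2 (p n) n (X n)) \<in> O(\<lambda>n. real n powr (3*\<gamma>9 + -\<gamma>0))"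
    by (rule LM[OF AM D2_O])
  have T1: "(\<lambda>n. (?Mr n + 1)^2 * (9 * ?Mr n + 1) * Delta_2 (p n) n (X n)) \<longlonglongrightarrow> 0"
    by (rule L0[OF T1O]) (use g_rel in linarith)
  have e1: "(\<lambda>n. ?Mr n * (\<eta> n * \<eta> n)) \<longlonglongrightarrow> 0"
    by (rule L0[OF LM[OF M_O LM[OF eta_O eta_O]]]) (use g_rel in linarith)
  have e2: "(\<lambda>n. ?pr n * (\<eta> n * \<eta> n)) \<longlonglongrightarrow> 0"
    by (rule L0[OF LM[OF p0_O LM[OF eta_O eta_O]]]) (use g_rel in linarith)
  have e3: "\<eta> \<longlonglongrightarrow> 0"
    by (rule L0[OF eta_O]) (use g_pos in linarith)
  have e4: "(\<lambda>n. \<eta> n * C4 (f n) (p n) (p0 n) (M n) (ft n)) \<longlonglongrightarrow> 0"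
    by (rule L0[OF LM[OF eta_O C4_O]]) (use g_rel in linarith)
  have e5: "(\<lambda>n. \<eta> n * C3 (f n) (p n) (p0 n) (ft n)) \<longlonglongrightarrow> 0"
    by (rule L0[OF LM[OF eta_O C3_O]]) (use g_rel in linarith)
  have e6: "(\<lambda>n. Delta_p0 (p0 n) n (X n) * v1 n) \<longlonglongrightarrow> 0"
    by (rule L0[OF LM[OF D1_O v1O]]) (use g_rel in linarith)
  have e7: "(\<lambda>n. Delta_p0M1 (p n) (p0 n) (M n) n (X n) * v2 n) \<longlonglongrightarrow> 0"
    by (rule L0[OF LM[OF D4_O v2O]]) (use g_rel in linarith)
  define E where "E n = 12 * \<tau>^2 - 12 * (?Mr n * (\<eta> n * \<eta> n) - ?pr n * (\<eta> n * \<eta> n) + \<eta> n * \<eta> n)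
     - 4 * (\<eta> n * \<eta> n) - 4 * (\<eta> n * C4 (f n) (p n) (p0 n) (M n) (ft n) + \<eta> n * C3 (f n) (p n) (p0 n) (ft n))
     - Delta_p0 (p0 n) n (X n) * v1 n - Delta_p0M1 (p n) (p0 n) (M n) n (X n) * v2 n
     - rho (zeta (1/2) (c1 n) (C2 (p n) (f n)) (Delta_p0 (p0 n) n (X n)) (Delta_2 (p n) n (X n)) (\<eta> n) (p0 n))
      (C3 (f n) (p n) (p0 n) (ft n)) (\<eta> n) (p0 n)
     - rho (zeta (1/2) (c1 n) (C2 (p n) (f n)) (Delta_p0p1 (p n) (p0 n) n (X n)) (Delta_2 (p n) n (X n)) (\<eta> n) (M n))
      (C4 (f n) (p n) (p0 n) (M n) (ft n)) (\<eta> n) (M n)" for n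
  have "E \<longlonglongrightarrow> 12 * \<tau>^2 - 12 * (0 - 0 + 0*0) - 4 * (0*0) - 4 * (0 + 0) - 0 - 0 - 0 - 0"
    unfolding E_def by (intro tendsto_intros e1 e2 e3 e4 e5 e6 e7 r1 r2)
  then have LE': "E \<longlonglongrightarrow> 12 * \<tau>^2" by simp
  have "6 * \<tau>^2 < 12 * \<tau>^2" using tau_pos by simp
  from order_tendstoD(1)[OF LE' this] have evE: "eventually (\<lambda>n. 6 * \<tau>^2 < E n) sequentially" .
  have T1': "(\<lambda>n. 3 * ((?Mr n + 1)^2 * (9 * ?Mr n + 1) * Delta_2 (p n) n (X n))) \<longlonglongrightarrow> 3 * 0"
    by (intro tendsto_intros T1)
  have evT: "eventually (\<lambda>n. 3 * ((?Mr n + 1)^2 * (9 * ?Mr n + 1) * Delta_2 (p n) n (X n)) < 1/2) sequentially"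
    using order_tendstoD(2)[OF T1', of "1/2"] by simp
  show ?thesis
    apply (rule exI[of _ "1/2"], rule exI[of _ "6 * \<tau>^2"], intro conjI)
       apply simp
      apply simp
     using tau_pos apply simp
    using evE evT
    proof eventually_elim
      case (elim n)
      have T: "3 * (?Mr n + 1)^2 * (9 * ?Mr n + 1) * Delta_2 (p n) n (X n) < 1/2"
          using elim(2) by (simp add: mult.assoc)
        have "E n = 12 * \<tau>^2 - 12 * (?Mr n - ?pr n + 1) * (\<eta> n)^2 - 4 * (\<eta> n)^2
            - 4 * \<eta> n * (C4 (f n) (p n) (p0 n) (M n) (ft n) + C3 (f n) (p n) (p0 n) (ft n))
            - Delta_p0 (p0 n) n (X n) * v1 n - Delta_p0M1 (p n) (p0 n) (M n) n (X n) * v2 n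
     - rho (zeta (1/2) (c1 n) (C2 (p n) (f n)) (Delta_p0 (p0 n) n (X n)) (Delta_2 (p n) n (X n)) (\<eta> n) (p0 n))
      (C3 (f n) (p n) (p0 n) (ft n)) (\<eta> n) (p0 n)
     - rho (zeta (1/2) (c1 n) (C2 (p n) (f n)) (Delta_p0p1 (p n) (p0 n) n (X n)) (Delta_2 (p n) n (X n)) (\<eta> n) (M n))
      (C4 (f n) (p n) (p0 n) (M n) (ft n)) (\<eta> n) (M n)"
          unfolding E_def by (simp add: algebra_simps power2_eq_square)
        then have G: "12 * \<tau>^2 - 12 * (?Mr n - ?pr n + 1) * (\<eta> n)^2 - 4 * (\<eta> n)^2
            - 4 * \<eta> n * (C4 (f n) (p n) (p0 n) (M n) (ft n) + C3 (f n) (p n) (p0 n) (ft n))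
            - Delta_p0 (p0 n) n (X n) * v1 n - Delta_p0M1 (p n) (p0 n) (M n) n (X n) * v2 n
     - rho (zeta (1/2) (c1 n) (C2 (p n) (f n)) (Delta_p0 (p0 n) n (X n)) (Delta_2 (p n) n (X n)) (\<eta> n) (p0 n))
      (C3 (f n) (p n) (p0 n) (ft n)) (\<eta> n) (p0 n)
     - rho (zeta (1/2) (c1 n) (C2 (p n) (f n)) (Delta_p0p1 (p n) (p0 n) n (X n)) (Delta_2 (p n) n (X n)) (\<eta> n) (M n))
      (C4 (f n) (p n) (p0 n) (M n) (ft n)) (\<eta> n) (M n) > 6 * \<tau>^2"
          using elim(1) by simp
      show ?case using T G unfolding c1_def v1_def v2_def Let_def by blast
    qed
qed

end
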